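(* Let $m,n\ge 0$ be integers. Every clique $C$ in ${\rm SR}(m,n)$ is of one of the following three types: 1. All pairs of distinct vertices of $C$ differ exactly in coordinates $j$ and $k$, for a fixed pair $j\ne k$; then $|C|\le n+1$. 2. $C=\{x+ae_i : i\in I\}$, where $a$ is an integer with $1\le a\le n$, $x\in\mathbb{N}^m$ has coordinate sum $n-a$, and $I\subseteq\{1,\dots,m\}$; then $|C|\le m$. 3. $C=\{x-ae_i : i\in I\}$, where $a$ is an integer with $a\ge 1$, $x\in\mathbb{N}^m$ has coordinate sum $n+a$, $I\subseteq\{1,\dots,m\}$, and $x_i\ge a$ for all $i\in I$; then $|C|\le m$.
   Context: $\mathbb{N}=\{0,1,2,\dots\}$. ${\rm SR}(m,n)$ is the graph whose vertices are the vectors in $\mathbb{N}^m$ with coordinate sum $n$, two vertices being adjacent when they differ in precisely two coordinate positions. $e_i$ is the $i$-th standard unit vector. A clique is a set of pairwise adjacent vertices. *)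

theory Defs
  imports Main
begin

text \<open>Vectors in N^m are represented as functions nat => nat vanishing outside
  the coordinate positions {0..<m} (coordinates are 0-indexed).\<close>

definition in_Nm :: "nat \<Rightarrow> (nat \<Rightarrow> nat) \<Rightarrow> bool" where
  "in_Nm m x \<longleftrightarrow> (\<forall>i\<ge>m. x i = 0)"

definition coord_sum :: "nat \<Rightarrow> (nat \<Rightarrow> nat) \<Rightarrow> nat" where
  "coord_sum m x = (\<Sum>i<m. x i)"

definition SR_verts :: "nat \<Rightarrow> nat \<Rightarrow> (nat \<Rightarrow> nat) set" where
  "SR_verts m n = {x. in_Nm m x \<and> coord_sum m x = n}"

definition diff_coords :: "nat \<Rightarrow> (nat \<Rightarrow> nat) \<Rightarrow> (nat \<Rightarrow> nat) \<Rightarrow> nat set" where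
  "diff_coords m x y = {i. i < m \<and> x i \<noteq> y i}"

definition SR_adj :: "nat \<Rightarrow> nat \<Rightarrow> (nat \<Rightarrow> nat) \<Rightarrow> (nat \<Rightarrow> nat) \<Rightarrow> bool" where
  "SR_adj m n x y \<longleftrightarrow> x \<in> SR_verts m n \<and> y \<in> SR_verts m n \<and> card (diff_coords m x y) = 2"

definition SR_clique :: "nat \<Rightarrow> nat \<Rightarrow> (nat \<Rightarrow> nat) set \<Rightarrow> bool" where
  "SR_clique m n C \<longleftrightarrow> C \<subseteq> SR_verts m n \<and> (\<forall>x\<in>C. \<forall>y\<in>C. x \<noteq> y \<longrightarrow> SR_adj m n x y)"

definition unit_vec :: "nat \<Rightarrow> nat \<Rightarrow> nat" where
  "unit_vec i = (\<lambda>j. if j = i then 1 else 0)"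

definition vplus :: "(nat \<Rightarrow> nat) \<Rightarrow> nat \<Rightarrow> (nat \<Rightarrow> nat) \<Rightarrow> (nat \<Rightarrow> nat)" where
  "vplus x a v = (\<lambda>j. x j + a * v j)"

definition vminus :: "(nat \<Rightarrow> nat) \<Rightarrow> nat \<Rightarrow> (nat \<Rightarrow> nat) \<Rightarrow> (nat \<Rightarrow> nat)" where
  "vminus x a v = (\<lambda>j. x j - a * v j)"

end

theory Submission imports Defs begin

lemma agree:
  assumes "in_Nm m x" "in_Nm m y" "i \<notin> diff_coords m x y"
  shows "x i = y i"
  using assms unfolding in_Nm_def diff_coords_def by (cases "i < m") auto

lemma diff_fin: "finite (diff_coords m x y)"
  unfolding diff_coords_def by auto

lemma diff_sym: "diff_coords m x y = diff_coords m y x"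
  unfolding diff_coords_def by auto

lemma diff_lt: "i \<in> diff_coords m x y \<Longrightarrow> i < m"
  unfolding diff_coords_def by auto

lemma diff_mem: "i \<in> diff_coords m x y \<longleftrightarrow> i < m \<and> x i \<noteq> y i"
  unfolding diff_coords_def by auto

lemma sum2:
  assumes "x \<in> SR_verts m n" "y \<in> SR_verts m n" "c \<noteq> k" "c < m" "k < m"
    and ag: "\<And>i. i < m \<Longrightarrow> i \<notin> {c,k} \<Longrightarrow> x i = y i"
  shows "x c + x k = y c + y k"
proof -
  have U: "{..<m} = {c,k} \<union> ({..<m} - {c,k})" using assms by auto
  have "coord_sum m x = (\<Sum>i\<in>{c,k}. x i) + (\<Sum>i\<in>{..<m} - {c,k}. x i)"
    unfolding coord_sum_def by (subst U) (rule sum.union_disjoint, auto)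
  moreover have "coord_sum m y = (\<Sum>i\<in>{c,k}. y i) + (\<Sum>i\<in>{..<m} - {c,k}. y i)"
    unfolding coord_sum_def by (subst U) (rule sum.union_disjoint, auto)
  moreover have "(\<Sum>i\<in>{..<m} - {c,k}. x i) = (\<Sum>i\<in>{..<m} - {c,k}. y i)"
    using ag by (intro sum.cong) auto
  moreover have "coord_sum m x = coord_sum m y" using assms unfolding SR_verts_def by simp
  ultimately show ?thesis using assms(3) by simp
qed

lemma vplus_sum:
  assumes "i < m" shows "coord_sum m (vplus w a (unit_vec i)) = coord_sum m w + a"
  using assms unfolding coord_sum_def vplus_def unit_vec_def
  by (simp add: sum.distrib sum.delta if_distrib[of "\<lambda>t. a * t"] cong: if_cong)

lemma vminus_sum:
  assumes "i < m" "a \<le> w i" shows "coord_sum m w = coord_sum m (vminus w a (unit_vec i)) + a"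
proof -
  have "vplus (vminus w a (unit_vec i)) a (unit_vec i) = w"
    using assms by (auto simp: vplus_def vminus_def unit_vec_def)
  thus ?thesis using vplus_sum[OF assms(1), of "vminus w a (unit_vec i)" a] by simp
qed

lemma lemA:
  fixes u :: "nat \<Rightarrow> int"
  assumes out: "\<And>i. i \<ge> m \<Longrightarrow> u i = 0" and sm: "(\<Sum>i<m. u i) = a" and a: "a > 0"
    and d: "i1 \<noteq> i2" "i1 \<noteq> i3" "i2 \<noteq> i3" and lt: "i1 < m" "i2 < m" "i3 < m"
    and c: "\<And>t. t \<in> {i1,i2,i3} \<Longrightarrow> card {i. i < m \<and> u i \<noteq> (if i = t then a else 0)} = 2"
  shows "\<exists>l<m. \<forall>i. u i = (if i = l then a else 0)"
proof -
  define S where "S = {i. i < m \<and> u i \<noteq> 0}"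
  have fS: "finite S" unfolding S_def by auto
  have setT: "{i. i < m \<and> u i \<noteq> (if i = t then a else 0)} =
     (if u t = 0 then insert t S else if u t = a then S - {t} else S)" if "t < m" for t
    using that a unfolding S_def by auto
  have sumS: "(\<Sum>i<m. u i) = (\<Sum>i\<in>S. u i)"
    by (rule sum.mono_neutral_right) (auto simp: S_def)
  show ?thesis
  proof (cases "\<exists>t\<in>{i1,i2,i3}. u t = 0")
    case True
    then obtain t where t: "t \<in> {i1,i2,i3}" "u t = 0" by blast
    have tm: "t < m" using t lt by auto
    have "card (insert t S) = 2" using c[OF t(1)] setT[OF tm] t by simp
    moreover have "t \<notin> S" using t S_def by auto
    ultimately have "card S = 1" using fS by simp
    then obtain l where Sl: "S = {l}" using card_1_singletonE by blast
    have lm: "l < m" and ul: "u l \<noteq> 0" using Sl S_def by auto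
    have "u l = a" using sm sumS Sl by simp
    moreover have "\<forall>i. i \<noteq> l \<longrightarrow> u i = 0"
    proof (intro allI impI)
      fix i assume "i \<noteq> l"
      show "u i = 0"
      proof (cases "i < m")
        case True then show ?thesis using \<open>i \<noteq> l\<close> Sl S_def by auto
      qed (use out in auto)
    qed
    ultimately show ?thesis using lm by auto
  next
    case False
    hence inS: "{i1,i2,i3} \<subseteq> S" using lt S_def by auto
    have c3: "card {i1,i2,i3} = 3" using d by simp
    have cS: "card S \<ge> 3" using card_mono[OF fS inS] c3 by simp
    show ?thesis
    proof (cases "\<forall>t\<in>{i1,i2,i3}. u t = a")
      case True
      have u1: "u i1 = a" "u i1 \<noteq> 0" using True a by auto
      have "card (S - {i1}) = 2" using c[of i1] setT[OF lt(1)] u1 by simp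
      hence "card S = 3" using fS inS by (simp add: card_Diff_singleton)
      hence SE: "S = {i1,i2,i3}" using card_subset_eq[OF fS inS] c3 by simp
      have "(\<Sum>i\<in>S. u i) = 3 * a" using SE d True by simp
      then show ?thesis using sm sumS a by simp
    next
      case F2: False
      then obtain t where t: "t \<in> {i1,i2,i3}" "u t \<noteq> a" by blast
      have tm: "t < m" using t lt by auto
      have "u t \<noteq> 0" using t False by blast
      hence "card S = 2" using c[OF t(1)] setT[OF tm] t by simp
      then show ?thesis using cS by simp
    qed
  qed
qed

lemma share:
  assumes "card D1 = 2" "card D2 = 2" "D1 \<noteq> D2" "D1 \<inter> D2 \<noteq> {}"
  shows "\<exists>c k q. D1 = {c,k} \<and> D2 = {c,q} \<and> c \<noteq> k \<and> c \<noteq> q \<and> k \<noteq> q"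
proof -
  obtain j k where D1: "D1 = {j,k}" "j \<noteq> k" using assms(1) card_2_iff by metis
  obtain p q where D2: "D2 = {p,q}" "p \<noteq> q" using assms(2) card_2_iff by metis
  have D2': "D2 = {q,p}" using D2 by (simp add: insert_commute)
  have D1': "D1 = {k,j}" using D1 by (simp add: insert_commute)
  have "j = p \<or> j = q \<or> k = p \<or> k = q" using assms(4) D1 D2 by blast
  moreover
  { assume h: "j = p"
    have "k \<noteq> q" proof assume "k = q" thus False using h D1 D2 assms(3) by simp qed
    hence ?thesis using D1 D2 h by blast }
  moreover
  { assume h: "j = q"
    have "k \<noteq> p" proof assume "k = p" thus False using h D1 D2' assms(3) by simp qed
    hence ?thesis using D1 D2' D2 h by blast }
  moreover
  { assume h: "k = p"
    have "j \<noteq> q" proof assume "j = q" thus False using h D1' D2 assms(3) by simp qed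
    hence ?thesis using D1' D1 D2 h by blast }
  moreover
  { assume h: "k = q"
    have "j \<noteq> p" proof assume "j = p" thus False using h D1' D2' assms(3) by simp qed
    hence ?thesis using D1' D1 D2' D2 h by blast }
  ultimately show ?thesis by blast
qed

lemma triangle:
  assumes x: "x \<in> SR_verts m n" and y: "y \<in> SR_verts m n" and z: "z \<in> SR_verts m n"
    and cxy: "card (diff_coords m x y) = 2" and cxz: "card (diff_coords m x z) = 2"
    and cyz: "card (diff_coords m y z) = 2"
    and ne: "diff_coords m x y \<noteq> diff_coords m x z"
  shows "(\<exists>w a i1 i2 i3. i1 \<noteq> i2 \<and> i1 \<noteq> i3 \<and> i2 \<noteq> i3 \<and> i1 < m \<and> i2 < m \<and> i3 < m \<and>
            1 \<le> a \<and> in_Nm m w \<and> coord_sum m w + a = n \<and>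
            x = vplus w a (unit_vec i1) \<and> y = vplus w a (unit_vec i2) \<and> z = vplus w a (unit_vec i3))
       \<or> (\<exists>w a i1 i2 i3. i1 \<noteq> i2 \<and> i1 \<noteq> i3 \<and> i2 \<noteq> i3 \<and> i1 < m \<and> i2 < m \<and> i3 < m \<and>
            1 \<le> a \<and> in_Nm m w \<and> coord_sum m w = n + a \<and> a \<le> w i1 \<and> a \<le> w i2 \<and> a \<le> w i3 \<and>
            x = vminus w a (unit_vec i1) \<and> y = vminus w a (unit_vec i2) \<and> z = vminus w a (unit_vec i3))"
proof -
  have nx: "in_Nm m x" and ny: "in_Nm m y" and nz: "in_Nm m z"
    using x y z unfolding SR_verts_def by auto
  have int: "diff_coords m x y \<inter> diff_coords m x z \<noteq> {}"
  proof
    assume dis: "diff_coords m x y \<inter> diff_coords m x z = {}"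
    have sub: "diff_coords m x y \<union> diff_coords m x z \<subseteq> diff_coords m y z"
    proof
      fix i assume i: "i \<in> diff_coords m x y \<union> diff_coords m x z"
      show "i \<in> diff_coords m y z"
      proof (cases "i \<in> diff_coords m x y")
        case True
        hence "i \<notin> diff_coords m x z" using dis by auto
        hence "x i = z i" using agree nx nz by blast
        thus ?thesis using True by (auto simp: diff_mem)
      next
        case False
        hence "x i = y i" using agree nx ny by blast
        thus ?thesis using False i by (auto simp: diff_mem)
      qed
    qed
    have "card (diff_coords m x y \<union> diff_coords m x z) = 4"
      using card_Un_disjoint[OF diff_fin diff_fin dis] cxy cxz by simp
    thus False using card_mono[OF diff_fin sub] cyz by simp
  qed
  obtain c k q where D1: "diff_coords m x y = {c,k}" and D2: "diff_coords m x z = {c,q}"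
    and ck: "c \<noteq> k" "c \<noteq> q" "k \<noteq> q"
    using share[OF cxy cxz ne int] by blast
  have lt: "c < m" "k < m" "q < m" using D1 D2 diff_lt by blast+
  have agy: "\<And>i. i \<notin> {c,k} \<Longrightarrow> x i = y i" using agree nx ny D1 by metis
  have agz: "\<And>i. i \<notin> {c,q} \<Longrightarrow> x i = z i" using agree nx nz D2 by metis
  have m1: "x c \<noteq> y c" "x k \<noteq> y k" using D1 by (auto simp: diff_mem dest: equalityD2)
  have m2: "x c \<noteq> z c" "x q \<noteq> z q" using D2 by (auto simp: diff_mem dest: equalityD2)
  have "{k,q} \<subseteq> diff_coords m y z"
    using m1 m2 agy[of q] agz[of k] ck lt by (auto simp: diff_mem)
  hence Dyz: "diff_coords m y z = {k,q}"
    using card_subset_eq[OF diff_fin] cyz ck by (metis card_2_iff)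
  have ycz: "y c = z c" using Dyz ck agree ny nz by (metis insert_iff singletonD)
  have s1: "x c + x k = y c + y k" using sum2[OF x y ck(1) lt(1,2)] agy by blast
  have s2: "x c + x q = z c + z q" using sum2[OF x z ck(2) lt(1,3)] agz by blast
  show ?thesis
  proof (cases "x c < y c")
    case True
    define d where "d = y c - x c"
    define w where "w = x(c := y c)"
    have wx: "x = vminus w d (unit_vec c)"
      using True by (auto simp: vminus_def unit_vec_def w_def d_def)
    have wy: "y = vminus w d (unit_vec k)"
    proof
      fix i
      have "i = c \<or> i = k \<or> i \<notin> {c,k}" by blast
      moreover have "y c = vminus w d (unit_vec k) c" using ck by (simp add: vminus_def unit_vec_def w_def)
      moreover have "y k = vminus w d (unit_vec k) k" using ck True s1 by (simp add: vminus_def unit_vec_def w_def d_def)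
      moreover have "i \<notin> {c,k} \<Longrightarrow> y i = vminus w d (unit_vec k) i" using agy[of i] by (simp add: vminus_def unit_vec_def w_def)
      ultimately show "y i = vminus w d (unit_vec k) i" by blast
    qed
    have wz: "z = vminus w d (unit_vec q)"
    proof
      fix i
      have "i = c \<or> i = q \<or> i \<notin> {c,q}" by blast
      moreover have "z c = vminus w d (unit_vec q) c" using ck by (simp add: vminus_def unit_vec_def w_def ycz)
      moreover have "z q = vminus w d (unit_vec q) q" using ck True s2 ycz by (simp add: vminus_def unit_vec_def w_def d_def)
      moreover have "i \<notin> {c,q} \<Longrightarrow> z i = vminus w d (unit_vec q) i" using agz[of i] by (simp add: vminus_def unit_vec_def w_def)
      ultimately show "z i = vminus w d (unit_vec q) i" by blast
    qed
    have le: "d \<le> w c" "d \<le> w k" "d \<le> w q"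
      using True s1 s2 ycz ck by (auto simp: w_def d_def)
    have "coord_sum m w = coord_sum m x + d" using vminus_sum[of c m d w, OF lt(1) le(1)] wx by simp
    hence cs: "coord_sum m w = n + d" using x unfolding SR_verts_def by simp
    have "in_Nm m w" using nx lt unfolding in_Nm_def w_def by auto
    moreover have "1 \<le> d" using True d_def by simp
    ultimately show ?thesis using wx wy wz le cs ck lt
      by (intro disjI2 exI[of _ w] exI[of _ d] exI[of _ c] exI[of _ k] exI[of _ q]) simp
  next
    case False
    hence Fl: "y c < x c" using m1 by simp
    define d where "d = x c - y c"
    define w where "w = x(c := y c)"
    have wx: "x = vplus w d (unit_vec c)"
      using Fl by (auto simp: vplus_def unit_vec_def w_def d_def)
    have wy: "y = vplus w d (unit_vec k)"
    proof
      fix i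
      have "i = c \<or> i = k \<or> i \<notin> {c,k}" by blast
      moreover have "y c = vplus w d (unit_vec k) c" using ck by (simp add: vplus_def unit_vec_def w_def)
      moreover have "y k = vplus w d (unit_vec k) k" using ck Fl s1 by (simp add: vplus_def unit_vec_def w_def d_def)
      moreover have "i \<notin> {c,k} \<Longrightarrow> y i = vplus w d (unit_vec k) i" using agy[of i] by (simp add: vplus_def unit_vec_def w_def)
      ultimately show "y i = vplus w d (unit_vec k) i" by blast
    qed
    have wz: "z = vplus w d (unit_vec q)"
    proof
      fix i
      have "i = c \<or> i = q \<or> i \<notin> {c,q}" by blast
      moreover have "z c = vplus w d (unit_vec q) c" using ck by (simp add: vplus_def unit_vec_def w_def ycz)
      moreover have "z q = vplus w d (unit_vec q) q" using ck Fl s2 ycz by (simp add: vplus_def unit_vec_def w_def d_def)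
      moreover have "i \<notin> {c,q} \<Longrightarrow> z i = vplus w d (unit_vec q) i" using agz[of i] by (simp add: vplus_def unit_vec_def w_def)
      ultimately show "z i = vplus w d (unit_vec q) i" by blast
    qed
    have "coord_sum m x = coord_sum m w + d" using vplus_sum[OF lt(1)] wx by metis
    hence cs: "coord_sum m w + d = n" using x unfolding SR_verts_def by simp
    have "in_Nm m w" using nx lt unfolding in_Nm_def w_def by auto
    moreover have "1 \<le> d" using Fl d_def by simp
    ultimately show ?thesis using wx wy wz cs ck lt
      by (intro disjI1 exI[of _ w] exI[of _ d] exI[of _ c] exI[of _ k] exI[of _ q]) simp
  qed
qed

lemma ext_plus:
  assumes d: "i1 \<noteq> i2" "i1 \<noteq> i3" "i2 \<noteq> i3" and lt: "i1 < m" "i2 < m" "i3 < m"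
    and a: "1 \<le> a" and w: "in_Nm m w" "coord_sum m w + a = n"
    and v: "v \<in> SR_verts m n"
    and c: "\<And>t. t \<in> {i1,i2,i3} \<Longrightarrow> card (diff_coords m (vplus w a (unit_vec t)) v) = 2"
  shows "\<exists>l<m. v = vplus w a (unit_vec l)"
proof -
  define u where "u = (\<lambda>i. int (v i) - int (w i))"
  have out: "\<And>i. i \<ge> m \<Longrightarrow> u i = 0" using v w unfolding u_def SR_verts_def in_Nm_def by auto
  have "(\<Sum>i<m. u i) = int (coord_sum m v) - int (coord_sum m w)"
    unfolding u_def coord_sum_def by (simp add: sum_subtractf)
  hence sm: "(\<Sum>i<m. u i) = int a" using v w unfolding SR_verts_def by simp
  have eq: "diff_coords m (vplus w a (unit_vec t)) v = {i. i < m \<and> u i \<noteq> (if i = t then int a else 0)}" for t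
    unfolding diff_coords_def u_def vplus_def unit_vec_def by auto
  obtain l where l: "l < m" "\<forall>i. u i = (if i = l then int a else 0)"
    using lemA[OF out sm _ d lt] a c eq by auto
  have "v = vplus w a (unit_vec l)"
  proof
    fix i show "v i = vplus w a (unit_vec l) i"
      using l(2)[rule_format, of i] unfolding u_def vplus_def unit_vec_def by (cases "i = l") auto
  qed
  thus ?thesis using l by blast
qed

lemma ext_minus:
  assumes d: "i1 \<noteq> i2" "i1 \<noteq> i3" "i2 \<noteq> i3" and lt: "i1 < m" "i2 < m" "i3 < m"
    and a: "1 \<le> a" and w: "in_Nm m w" "coord_sum m w = n + a"
    and le: "a \<le> w i1" "a \<le> w i2" "a \<le> w i3"
    and v: "v \<in> SR_verts m n"
    and c: "\<And>t. t \<in> {i1,i2,i3} \<Longrightarrow> card (diff_coords m (vminus w a (unit_vec t)) v) = 2"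
  shows "\<exists>l<m. a \<le> w l \<and> v = vminus w a (unit_vec l)"
proof -
  define u where "u = (\<lambda>i. int (w i) - int (v i))"
  have out: "\<And>i. i \<ge> m \<Longrightarrow> u i = 0" using v w unfolding u_def SR_verts_def in_Nm_def by auto
  have "(\<Sum>i<m. u i) = int (coord_sum m w) - int (coord_sum m v)"
    unfolding u_def coord_sum_def by (simp add: sum_subtractf)
  hence sm: "(\<Sum>i<m. u i) = int a" using v w unfolding SR_verts_def by simp
  have eq: "diff_coords m (vminus w a (unit_vec t)) v = {i. i < m \<and> u i \<noteq> (if i = t then int a else 0)}"
    if "a \<le> w t" for t
    using that unfolding diff_coords_def u_def vminus_def unit_vec_def by auto
  have c': "card {i. i < m \<and> u i \<noteq> (if i = t then int a else 0)} = 2" if "t \<in> {i1,i2,i3}" for t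
  proof -
    have "a \<le> w t" using that le by auto
    thus ?thesis using c[OF that] eq by simp
  qed
  obtain l where l: "l < m" "\<forall>i. u i = (if i = l then int a else 0)"
    using lemA[OF out sm _ d lt c'] a by auto
  have al: "a \<le> w l" using l(2)[rule_format, of l] unfolding u_def by simp
  have "v = vminus w a (unit_vec l)"
  proof
    fix i show "v i = vminus w a (unit_vec l) i"
      using l(2)[rule_format, of i] unfolding u_def vminus_def unit_vec_def by (cases "i = l") auto
  qed
  thus ?thesis using l al by blast
qed

theorem lemma9:
  fixes m n :: nat and C :: "(nat \<Rightarrow> nat) set"
  assumes "SR_clique m n C"
  shows "(\<exists>j k. j \<noteq> k \<and>
            (\<forall>x\<in>C. \<forall>y\<in>C. x \<noteq> y \<longrightarrow> diff_coords m x y = {j, k}) \<and>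
            card C \<le> n + 1)
       \<or> (\<exists>(a::nat) x I. 1 \<le> a \<and> a \<le> n \<and> in_Nm m x \<and> coord_sum m x = n - a \<and>
            I \<subseteq> {..<m} \<and> C = (\<lambda>i. vplus x a (unit_vec i)) ` I \<and> card C \<le> m)
       \<or> (\<exists>(a::nat) x I. 1 \<le> a \<and> in_Nm m x \<and> coord_sum m x = n + a \<and>
            I \<subseteq> {..<m} \<and> (\<forall>i\<in>I. x i \<ge> a) \<and>
            C = (\<lambda>i. vminus x a (unit_vec i)) ` I \<and> card C \<le> m)"
proof -
  have CV: "C \<subseteq> SR_verts m n" and adj: "\<And>x y. x \<in> C \<Longrightarrow> y \<in> C \<Longrightarrow> x \<noteq> y \<Longrightarrow> card (diff_coords m x y) = 2"
    using assms unfolding SR_clique_def SR_adj_def by auto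
  show ?thesis
  proof (cases "C = {}")
    case True thus ?thesis by (intro disjI1 exI[of _ 0] exI[of _ 1]) simp
  next
    case False
    then obtain x0 where x0: "x0 \<in> C" by blast
    show ?thesis
    proof (cases "\<forall>y\<in>C. \<forall>z\<in>C. y \<noteq> x0 \<longrightarrow> z \<noteq> x0 \<longrightarrow> diff_coords m x0 y = diff_coords m x0 z")
      case True
      show ?thesis
      proof (cases "C = {x0}")
        case True thus ?thesis by (intro disjI1 exI[of _ 0] exI[of _ 1]) simp
      next
        case False
        then obtain y0 where y0: "y0 \<in> C" "y0 \<noteq> x0" using x0 by blast
        obtain j k where jk: "diff_coords m x0 y0 = {j,k}" "j \<noteq> k"
          using adj[OF x0 y0(1) y0(2)[symmetric]] card_2_iff by metis
        have jm: "j < m" using jk diff_lt by blast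
        have dx: "diff_coords m x0 y = {j,k}" if "y \<in> C" "y \<noteq> x0" for y
          using True that y0 jk by metis
        have pairs: "diff_coords m y z = {j,k}" if yz: "y \<in> C" "z \<in> C" "y \<noteq> z" for y z
        proof (cases "y = x0")
          case True thus ?thesis using dx yz by simp
        next
          case Fy: False
          show ?thesis
          proof (cases "z = x0")
            case True thus ?thesis using dx[of y] yz Fy diff_sym by metis
          next
            case Fz: False
            have ny: "in_Nm m y" and nz: "in_Nm m z" and nx: "in_Nm m x0"
              using CV yz x0 unfolding SR_verts_def by auto
            have "diff_coords m y z \<subseteq> {j,k}"
            proof
              fix i assume i: "i \<in> diff_coords m y z"
              show "i \<in> {j,k}"
              proof (rule ccontr)
                assume "i \<notin> {j,k}"
                hence "x0 i = y i" "x0 i = z i" using agree nx ny nz dx[OF yz(1) Fy] dx[OF yz(2) Fz] by metis+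
                thus False using i by (simp add: diff_mem)
              qed
            qed
            thus ?thesis using card_subset_eq[of "{j,k}"] adj[OF yz] jk by simp
          qed
        qed
        have inj: "inj_on (\<lambda>v. v j) C"
        proof (rule inj_onI)
          fix y z assume "y \<in> C" "z \<in> C" "y j = z j"
          show "y = z"
          proof (rule ccontr)
            assume "y \<noteq> z"
            hence "j \<in> diff_coords m y z" using pairs[of y z] \<open>y \<in> C\<close> \<open>z \<in> C\<close> by simp
            thus False using \<open>y j = z j\<close> by (simp add: diff_mem)
          qed
        qed
        have img: "(\<lambda>v. v j) ` C \<subseteq> {0..n}"
        proof
          fix t assume "t \<in> (\<lambda>v. v j) ` C"
          then obtain v where v: "v \<in> C" "t = v j" by blast
          have "v j \<le> (\<Sum>i<m. v i)" using jm by (intro member_le_sum) auto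
          thus "t \<in> {0..n}" using v CV unfolding SR_verts_def coord_sum_def by auto
        qed
        have "card C \<le> n + 1"
          using card_image[OF inj] card_mono[OF _ img] by simp
        thus ?thesis using pairs jk by (intro disjI1 exI[of _ j] exI[of _ k]) blast
      qed
    next
      case False
      then obtain y z where yz: "y \<in> C" "z \<in> C" "y \<noteq> x0" "z \<noteq> x0"
        "diff_coords m x0 y \<noteq> diff_coords m x0 z" by blast
      have "y \<noteq> z" using yz by blast
      have V: "x0 \<in> SR_verts m n" "y \<in> SR_verts m n" "z \<in> SR_verts m n" using CV x0 yz by auto
      from triangle[OF V adj[OF x0 yz(1) yz(3)[symmetric]] adj[OF x0 yz(2) yz(4)[symmetric]]
          adj[OF yz(1,2) \<open>y \<noteq> z\<close>] yz(5)]
      show ?thesis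
      proof (elim disjE exE conjE)
        fix w a i1 i2 i3
        assume d: "i1 \<noteq> i2" "i1 \<noteq> i3" "i2 \<noteq> i3" and lt: "i1 < m" "i2 < m" "i3 < m"
          and a: "1 \<le> a" and w: "in_Nm m w" "coord_sum m w + a = n"
          and e: "x0 = vplus w a (unit_vec i1)" "y = vplus w a (unit_vec i2)" "z = vplus w a (unit_vec i3)"
        define I where "I = {i. i < m \<and> vplus w a (unit_vec i) \<in> C}"
        have "C \<subseteq> (\<lambda>i. vplus w a (unit_vec i)) ` I"
        proof
          fix v assume v: "v \<in> C"
          show "v \<in> (\<lambda>i. vplus w a (unit_vec i)) ` I"
          proof (cases "v \<in> {x0,y,z}")
            case True
            then obtain t where t: "t \<in> {i1,i2,i3}" "v = vplus w a (unit_vec t)" using e by blast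
            have "t \<in> I" using t lt v unfolding I_def by auto
            thus ?thesis using t(2) by (rule rev_image_eqI)
          next
            case False
            have "card (diff_coords m (vplus w a (unit_vec t)) v) = 2" if "t \<in> {i1,i2,i3}" for t
            proof -
              have "vplus w a (unit_vec t) \<in> {x0,y,z}" using that e by auto
              hence "vplus w a (unit_vec t) \<in> C" "vplus w a (unit_vec t) \<noteq> v" using False x0 yz by auto
              thus ?thesis using adj[OF _ v] by blast
            qed
            then obtain l where "l < m" "v = vplus w a (unit_vec l)"
              using ext_plus[OF d lt a w] v CV by blast
            thus ?thesis using v unfolding I_def by auto
          qed
        qed
        moreover have "(\<lambda>i. vplus w a (unit_vec i)) ` I \<subseteq> C" unfolding I_def by auto
        ultimately have CI: "C = (\<lambda>i. vplus w a (unit_vec i)) ` I" by blast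
        have "I \<subseteq> {..<m}" unfolding I_def by auto
        hence "card I \<le> m" using card_mono[of "{..<m}" I] by simp
        moreover have "finite I" using \<open>I \<subseteq> {..<m}\<close> finite_subset by blast
        ultimately have "card C \<le> m" using CI card_image_le[of I] by (metis le_trans)
        moreover have "coord_sum m w = n - a" "a \<le> n" using w by auto
        ultimately show ?thesis using a w CI \<open>I \<subseteq> {..<m}\<close>
          by (intro disjI2 disjI1 exI[of _ a] exI[of _ w] exI[of _ I]) simp
      next
        fix w a i1 i2 i3
        assume d: "i1 \<noteq> i2" "i1 \<noteq> i3" "i2 \<noteq> i3" and lt: "i1 < m" "i2 < m" "i3 < m"
          and a: "1 \<le> a" and w: "in_Nm m w" "coord_sum m w = n + a"
          and le: "a \<le> w i1" "a \<le> w i2" "a \<le> w i3"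
          and e: "x0 = vminus w a (unit_vec i1)" "y = vminus w a (unit_vec i2)" "z = vminus w a (unit_vec i3)"
        define I where "I = {i. i < m \<and> a \<le> w i \<and> vminus w a (unit_vec i) \<in> C}"
        have "C \<subseteq> (\<lambda>i. vminus w a (unit_vec i)) ` I"
        proof
          fix v assume v: "v \<in> C"
          show "v \<in> (\<lambda>i. vminus w a (unit_vec i)) ` I"
          proof (cases "v \<in> {x0,y,z}")
            case True
            then obtain t where t: "t \<in> {i1,i2,i3}" "v = vminus w a (unit_vec t)" using e by blast
            have "t \<in> I" using t lt le v unfolding I_def by auto
            thus ?thesis using t(2) by (rule rev_image_eqI)
          next
            case False
            have "card (diff_coords m (vminus w a (unit_vec t)) v) = 2" if "t \<in> {i1,i2,i3}" for t
            proof -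
              have "vminus w a (unit_vec t) \<in> {x0,y,z}" using that e by auto
              hence "vminus w a (unit_vec t) \<in> C" "vminus w a (unit_vec t) \<noteq> v" using False x0 yz by auto
              thus ?thesis using adj[OF _ v] by blast
            qed
            then obtain l where "l < m" "a \<le> w l" "v = vminus w a (unit_vec l)"
              using ext_minus[OF d lt a w le] v CV by blast
            thus ?thesis using v unfolding I_def by auto
          qed
        qed
        moreover have "(\<lambda>i. vminus w a (unit_vec i)) ` I \<subseteq> C" unfolding I_def by auto
        ultimately have CI: "C = (\<lambda>i. vminus w a (unit_vec i)) ` I" by blast
        have Im: "I \<subseteq> {..<m}" unfolding I_def by auto
        hence "card I \<le> m" using card_mono[of "{..<m}" I] by simp
        moreover have "finite I" using Im finite_subset by blast
        ultimately have "card C \<le> m" using CI card_image_le[of I] by (metis le_trans)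
        moreover have "\<forall>i\<in>I. a \<le> w i" unfolding I_def by auto
        ultimately show ?thesis using a w CI Im
          by (intro disjI2 exI[of _ a] exI[of _ w] exI[of _ I]) simp
      qed
    qed
  qed
qed

end
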